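(* Let $\mathcal{D}$ be a finite set with a metric $d$, let $\phi:\mathcal{D}\to\mathbb{R}^{d'}$, and let $M>0$, $m>0$. Suppose that $\ell_T(x_a,x_p,x_n;\phi,m)=0$ for all $x_a\in\mathcal{D}$, $x_p\in B_M(x_a)$, $x_n\in\bar B_M(x_a)$. Then for all $x_i,x_r\in\mathcal{D}$ with $\|\phi(x_i)-\phi(x_r)\|<m$ we have $d(x_i,x_r)<M$.
   Context: $\|\cdot\|$ is the Euclidean norm. $B_M(x)=\{x'\in\mathcal{D}: d(x,x')<M\}$ and $\bar B_M(x)=\mathcal{D}\setminus B_M(x)$. The per-example triplet loss is $\ell_T(x_a,x_p,x_n;\phi,m)=\max(0,\,m+\|\phi(x_a)-\phi(x_p)\|-\|\phi(x_a)-\phi(x_n)\|)$. *)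

theory Defs
  imports "HOL-Analysis.Analysis"
begin

definition metric_on :: "'a set \<Rightarrow> ('a \<Rightarrow> 'a \<Rightarrow> real) \<Rightarrow> bool" where
  "metric_on D d \<longleftrightarrow>
     (\<forall>x\<in>D. \<forall>y\<in>D. 0 \<le> d x y) \<and>
     (\<forall>x\<in>D. \<forall>y\<in>D. d x y = 0 \<longleftrightarrow> x = y) \<and>
     (\<forall>x\<in>D. \<forall>y\<in>D. d x y = d y x) \<and>
     (\<forall>x\<in>D. \<forall>y\<in>D. \<forall>z\<in>D. d x z \<le> d x y + d y z)"

definition ball_D :: "'a set \<Rightarrow> ('a \<Rightarrow> 'a \<Rightarrow> real) \<Rightarrow> real \<Rightarrow> 'a \<Rightarrow> 'a set" where
  "ball_D D d M x = {x' \<in> D. d x x' < M}"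

definition coball_D :: "'a set \<Rightarrow> ('a \<Rightarrow> 'a \<Rightarrow> real) \<Rightarrow> real \<Rightarrow> 'a \<Rightarrow> 'a set" where
  "coball_D D d M x = D - ball_D D d M x"

definition triplet_loss :: "('a \<Rightarrow> real ^ 'n) \<Rightarrow> real \<Rightarrow> 'a \<Rightarrow> 'a \<Rightarrow> 'a \<Rightarrow> real" where
  "triplet_loss \<phi> m xa xp xn =
     max 0 (m + norm (\<phi> xa - \<phi> xp) - norm (\<phi> xa - \<phi> xn))"

end

theory Submission
  imports Defs
begin

theorem lemma1:
  fixes D :: "'a set" and d :: "'a \<Rightarrow> 'a \<Rightarrow> real"
    and \<phi> :: "'a \<Rightarrow> real ^ 'n" and M m :: real
  assumes "finite D" and "metric_on D d" and "M > 0" and "m > 0"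
    and "\<forall>xa\<in>D. \<forall>xp\<in>ball_D D d M xa. \<forall>xn\<in>coball_D D d M xa.
           triplet_loss \<phi> m xa xp xn = 0"
  shows "\<forall>xi\<in>D. \<forall>xr\<in>D. norm (\<phi> xi - \<phi> xr) < m \<longrightarrow> d xi xr < M"
proof (intro ballI impI, rule ccontr)
  fix xi xr assume xi: "xi \<in> D" and xr: "xr \<in> D" and n: "norm (\<phi> xi - \<phi> xr) < m"
    and c: "\<not> d xi xr < M"
  have "d xi xi = 0" using assms(2) xi unfolding metric_on_def by blast
  hence p: "xi \<in> ball_D D d M xi" using xi assms(3) unfolding ball_D_def by simp
  have q: "xr \<in> coball_D D d M xi" using xr c unfolding coball_D_def ball_D_def by simp
  have "triplet_loss \<phi> m xi xi xr = 0" using assms(5) xi p q by blast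
  hence "m - norm (\<phi> xi - \<phi> xr) \<le> 0" unfolding triplet_loss_def by (simp add: max_def split: if_splits)
  thus False using n by simp
qed

end
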